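(* In the setting described in the context, let $X\in\mathcal{K}(\mathbb{R}^n)$ satisfy $X\cap\mathcal{D}_{\mathcal{A}}=\emptyset$, and let $(X_k)_{k\in\mathbb{Z}_+}\subset\mathcal{K}(\mathbb{R}^n)$ converge to $X$ in the Hausdorff distance. Then $\lim_{k\to\infty}\mathcal{V}(X_k)=\infty$.
   Context: Let $\|\cdot\|$ be a norm on $\mathbb{R}^n$ and $\mathrm{dist}(x,\Omega):=\inf_{y\in\Omega}\|x-y\|$. Let $\mathcal{K}(\mathbb{R}^n)$ denote the nonempty compact subsets of $\mathbb{R}^n$, with Hausdorff distance $d_H(X,Y):=\max\{\sup_{x\in X}\mathrm{dist}(x,Y),\sup_{y\in Y}\mathrm{dist}(y,X)\}$. Consider $x_{k+1}=f(x_k,u_k)$ with $f:\mathbb{R}^n\times\mathbb{R}^m\to\mathbb{R}^n$ continuous and inputs $u_k\in U$, $U\subset\mathbb{R}^m$ nonempty compact. For $x\in\mathbb{R}^n$ and $\pi:\mathbb{Z}_+\to U$, $\varphi_x^\pi(0)=x$, $\varphi_x^\pi(k+1)=f(\varphi_x^\pi(k),\pi(k))$; $\mathcal{R}(X,k):=\{\varphi_x^\pi(k):x\in X,\pi\in U^{\mathbb{Z}_+}\}$. Let $\mathcal{A}\in\mathcal{K}(\mathbb{R}^n)$ be controlled invariant. Assume local $\ell_p$-stabilizability: there exist $r>0$, $M\ge1$, $p>0$, $\lambda:[0,r]\times\mathbb{Z}_+\to\mathbb{R}_+$ such that (1) for each $k$, $s\mapsto\lambda(s,k)$ is continuous, nondecreasing,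 $\lambda(0,k)=0$; for each $s$, $k\mapsto\lambda(s,k)$ is nonincreasing, $\lambda(s,0)\le s$; (2) $\sum_{k}\lambda(r,k)^p<\infty$; (3) for every $x$ with $\mathrm{dist}(x,\mathcal{A})\le r$ there is $\pi\in U^{\mathbb{Z}_+}$ with $\mathrm{dist}(\varphi_x^\pi(k),\mathcal{A})\le M\lambda(\mathrm{dist}(x,\mathcal{A}),k)$ for all $k$. Let $\mathcal{D}_{\mathcal{A}}:=\{x:\exists\pi\in U^{\mathbb{Z}_+},\ \lim_{k\to\infty}\mathrm{dist}(\varphi_x^\pi(k),\mathcal{A})=0\}$. Let $\alpha:\mathbb{R}^n\to\mathbb{R}_+$ be continuous with $\underline{\alpha}\,\mathrm{dist}(x,\mathcal{A})^{\bar p}\le\alpha(x)\le\overline{\alpha}\,\mathrm{dist}(x,\mathcal{A})^{\bar p}$, constants $\underline{\alpha},\overline{\alpha}>0$, $\bar p\ge p$. Define $\Psi(X):=\inf_{y\in X}\alpha(y)$ and $\mathcal{V}(X):=\sum_{k=0}^\infty\Psi(\mathcal{R}(X,k))\in[0,\infty]$. *)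

theory Defs
  imports "HOL-Analysis.Analysis"
begin

text \<open>State space: a real normed vector space with the Heine-Borel property,
  i.e. a finite-dimensional normed space; this is R^n equipped with an
  arbitrary norm. dist(x, Omega) is the library's infdist.\<close>

definition hausd :: "'a::metric_space set \<Rightarrow> 'a set \<Rightarrow> real" where
  "hausd X Y = max (SUP x\<in>X. infdist x Y) (SUP y\<in>Y. infdist y X)"

primrec traj :: "('a \<Rightarrow> 'b \<Rightarrow> 'a) \<Rightarrow> 'a \<Rightarrow> (nat \<Rightarrow> 'b) \<Rightarrow> nat \<Rightarrow> 'a" where
  "traj f x \<pi> 0 = x"
| "traj f x \<pi> (Suc k) = f (traj f x \<pi> k) (\<pi> k)"

definition reach :: "('a \<Rightarrow> 'b \<Rightarrow> 'a) \<Rightarrow> 'b set \<Rightarrow> 'a set \<Rightarrow> nat \<Rightarrow> 'a set" where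
  "reach f U X k = {traj f x \<pi> k | x \<pi>. x \<in> X \<and> (\<forall>j. \<pi> j \<in> U)}"

definition controlled_invariant :: "('a \<Rightarrow> 'b \<Rightarrow> 'a) \<Rightarrow> 'b set \<Rightarrow> 'a set \<Rightarrow> bool" where
  "controlled_invariant f U A \<longleftrightarrow> (\<forall>x\<in>A. \<exists>u\<in>U. f x u \<in> A)"

definition locally_lp_stabilizable ::
  "('a::metric_space \<Rightarrow> 'b \<Rightarrow> 'a) \<Rightarrow> 'b set \<Rightarrow> 'a set \<Rightarrow> real \<Rightarrow> real \<Rightarrow> real
     \<Rightarrow> (real \<Rightarrow> nat \<Rightarrow> real) \<Rightarrow> bool" where
  "locally_lp_stabilizable f U A r M p lam \<longleftrightarrow>
     r > 0 \<and> M \<ge> 1 \<and> p > 0 \<and>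
     (\<forall>s\<in>{0..r}. \<forall>k. lam s k \<ge> 0) \<and>
     (\<forall>k. continuous_on {0..r} (\<lambda>s. lam s k) \<and> mono_on {0..r} (\<lambda>s. lam s k) \<and> lam 0 k = 0) \<and>
     (\<forall>s\<in>{0..r}. antimono (\<lambda>k. lam s k) \<and> lam s 0 \<le> s) \<and>
     summable (\<lambda>k. lam r k powr p) \<and>
     (\<forall>x. infdist x A \<le> r \<longrightarrow>
        (\<exists>\<pi>. (\<forall>j. \<pi> j \<in> U) \<and>
             (\<forall>k. infdist (traj f x \<pi> k) A \<le> M * lam (infdist x A) k)))"

definition DA :: "('a::metric_space \<Rightarrow> 'b \<Rightarrow> 'a) \<Rightarrow> 'b set \<Rightarrow> 'a set \<Rightarrow> 'a set" where
  "DA f U A = {x. \<exists>\<pi>. (\<forall>j. \<pi> j \<in> U) \<and> (\<lambda>k. infdist (traj f x \<pi> k) A) \<longlonglongrightarrow> 0}"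

definition Psi :: "('a \<Rightarrow> real) \<Rightarrow> 'a set \<Rightarrow> real" where
  "Psi \<alpha> X = (INF y\<in>X. \<alpha> y)"

definition Vfun :: "('a \<Rightarrow> real) \<Rightarrow> ('a \<Rightarrow> 'b \<Rightarrow> 'a) \<Rightarrow> 'b set \<Rightarrow> 'a set \<Rightarrow> ennreal" where
  "Vfun \<alpha> f U X = (\<Sum>k. ennreal (Psi \<alpha> (reach f U X k)))"

end

theory Submission
  imports Defs
begin

lemma traj_cong: "(\<forall>i<k. \<pi> i = \<pi>' i) \<Longrightarrow> traj f x \<pi> k = traj f x \<pi>' k"
  by (induction k) auto

lemma traj_shift: "traj f x \<pi> (j + k) = traj f (traj f x \<pi> j) (\<lambda>i. \<pi> (j + i)) k"
  by (induction k) auto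

lemma infdist_lessE:
  assumes "infdist x S < e" "S \<noteq> {}"
  obtains a where "a \<in> S" "dist x a < e"
proof -
  have "(INF a\<in>S. dist x a) < e" using assms infdist_notempty by metis
  then have "\<exists>a\<in>S. dist x a < e"
    using cINF_less_iff[OF assms(2), of "dist x" e] by (auto intro: bdd_belowI2[where m=0])
  then show ?thesis using that by blast
qed

lemma reach_0:
  assumes "U \<noteq> {}" shows "reach f U C 0 = C"
proof -
  obtain u where "u \<in> U" using assms by blast
  then show ?thesis unfolding reach_def by (auto intro!: exI[of _ "\<lambda>_. u"])
qed

lemma reach_Suc:
  "reach f U C (Suc j) = (\<lambda>(x, u). f x u) ` (reach f U C j \<times> U)"
proof
  show "reach f U C (Suc j) \<subseteq> (\<lambda>(x, u). f x u) ` (reach f U C j \<times> U)"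
  proof
    fix z assume "z \<in> reach f U C (Suc j)"
    then obtain x \<pi> where z: "z = traj f x \<pi> (Suc j)" "x \<in> C" "\<forall>i. \<pi> i \<in> U"
      unfolding reach_def by blast
    have "traj f x \<pi> j \<in> reach f U C j" unfolding reach_def using z by blast
    then have "(traj f x \<pi> j, \<pi> j) \<in> reach f U C j \<times> U" using z by blast
    moreover have "z = (\<lambda>(x, u). f x u) (traj f x \<pi> j, \<pi> j)" using z by simp
    ultimately show "z \<in> (\<lambda>(x, u). f x u) ` (reach f U C j \<times> U)" by (rule rev_image_eqI)
  qed
next
  show "(\<lambda>(x, u). f x u) ` (reach f U C j \<times> U) \<subseteq> reach f U C (Suc j)"
  proof
    fix z assume "z \<in> (\<lambda>(x, u). f x u) ` (reach f U C j \<times> U)"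
    then obtain x \<pi> u where z: "z = f (traj f x \<pi> j) u" "x \<in> C" "\<forall>i. \<pi> i \<in> U" "u \<in> U"
      unfolding reach_def by auto
    have "traj f x (\<pi>(j := u)) j = traj f x \<pi> j" by (rule traj_cong) auto
    then have "z = traj f x (\<pi>(j := u)) (Suc j)" using z by simp
    moreover have "\<forall>i. (\<pi>(j := u)) i \<in> U" using z by auto
    ultimately show "z \<in> reach f U C (Suc j)" unfolding reach_def using z by blast
  qed
qed

lemma reach_compact:
  fixes f :: "'a::{real_normed_vector,heine_borel} \<Rightarrow> 'b::euclidean_space \<Rightarrow> 'a"
  assumes "continuous_on UNIV (\<lambda>(x, u). f x u)" "compact U" "U \<noteq> {}" "compact C"
  shows "compact (reach f U C j)"
proof (induction j)
  case 0 then show ?case using assms reach_0 by metis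
next
  case (Suc j)
  show ?case unfolding reach_Suc
    by (rule compact_continuous_image[OF continuous_on_subset[OF assms(1)]])
       (auto intro: compact_Times Suc assms)
qed

lemma reach_ne:
  assumes "U \<noteq> {}" "C \<noteq> {}" shows "reach f U C j \<noteq> {}"
proof -
  obtain u where "u \<in> U" using assms by blast
  obtain x where "x \<in> C" using assms by blast
  have "traj f x (\<lambda>_. u) j \<in> reach f U C j" unfolding reach_def using \<open>u \<in> U\<close> \<open>x \<in> C\<close> by blast
  then show ?thesis by blast
qed

lemma unif_step:
  fixes f :: "'a::{real_normed_vector,heine_borel} \<Rightarrow> 'b::euclidean_space \<Rightarrow> 'a"
  assumes fc: "continuous_on UNIV (\<lambda>(x, u). f x u)" and U: "compact U" and C: "compact C"
    and e: "e > 0"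
  shows "\<exists>d>0. \<forall>y c u. c \<in> C \<longrightarrow> u \<in> U \<longrightarrow> dist y c < d \<longrightarrow> dist (f y u) (f c u) < e"
proof -
  define S where "S = {x + y | x y. x \<in> C \<and> y \<in> cball (0::'a) 1}"
  have "compact S" unfolding S_def by (rule compact_sums[OF C compact_cball])
  then have "compact (S \<times> U)" using U by (rule compact_Times)
  then have "uniformly_continuous_on (S \<times> U) (\<lambda>(x, u). f x u)"
    by (rule compact_uniformly_continuous[OF continuous_on_subset[OF fc], rotated]) auto
  then obtain d where d: "d > 0"
    "\<forall>x\<in>S \<times> U. \<forall>x'\<in>S \<times> U. dist x' x < d \<longrightarrow> dist ((\<lambda>(x, u). f x u) x') ((\<lambda>(x, u). f x u) x) < e"
    unfolding uniformly_continuous_on_def using e by blast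
  show ?thesis
  proof (intro exI[of _ "min d 1"] conjI allI impI)
    fix y c u assume h: "c \<in> C" "u \<in> U" "dist y c < min d 1"
    have "c = c + 0" by simp
    then have "c \<in> S" unfolding S_def using h(1) by fastforce
    have "y = c + (y - c)" by simp
    moreover have "y - c \<in> cball 0 1" using h(3) by (simp add: dist_norm norm_minus_commute)
    ultimately have "y \<in> S" unfolding S_def using h(1) by blast
    have "dist (y, u) (c, u) < d" using h(3) by (simp add: dist_Pair_Pair)
    then show "dist (f y u) (f c u) < e"
      using d(2)[rule_format, of "(c, u)" "(y, u)"] \<open>y \<in> S\<close> \<open>c \<in> S\<close> h(2) by simp
  qed (use d in auto)
qed

lemma traj_near:
  fixes f :: "'a::{real_normed_vector,heine_borel} \<Rightarrow> 'b::euclidean_space \<Rightarrow> 'a"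
  assumes fc: "continuous_on UNIV (\<lambda>(x, u). f x u)" and U: "compact U" "U \<noteq> {}"
    and C: "compact C" "C \<noteq> {}"
  shows "\<forall>e>0. \<exists>d>0. \<forall>y (\<pi>::nat\<Rightarrow>'b). infdist y C < d \<longrightarrow> (\<forall>i. \<pi> i \<in> U) \<longrightarrow>
           infdist (traj f y \<pi> j) (reach f U C j) < e"
proof (induction j)
  case 0 show ?case
  proof (intro allI impI)
    fix e :: real assume "e > 0"
    then show "\<exists>d>0. \<forall>y (\<pi>::nat\<Rightarrow>'b). infdist y C < d \<longrightarrow> (\<forall>i. \<pi> i \<in> U) \<longrightarrow>
           infdist (traj f y \<pi> 0) (reach f U C 0) < e"
      using reach_0[OF U(2), of f C] by auto
  qed
next
  case (Suc j)
  show ?case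
  proof (intro allI impI)
    fix e :: real assume e: "e > 0"
    obtain d1 where d1: "d1 > 0"
      "\<forall>y c u. c \<in> reach f U C j \<longrightarrow> u \<in> U \<longrightarrow> dist y c < d1 \<longrightarrow> dist (f y u) (f c u) < e"
      using unif_step[OF fc U(1) reach_compact[OF fc U C(1)] e] by blast
    obtain d where d: "d > 0" "\<forall>y (\<pi>::nat\<Rightarrow>'b). infdist y C < d \<longrightarrow> (\<forall>i. \<pi> i \<in> U) \<longrightarrow>
           infdist (traj f y \<pi> j) (reach f U C j) < d1"
      using Suc[rule_format, OF d1(1)] by blast
    show "\<exists>d>0. \<forall>y (\<pi>::nat\<Rightarrow>'b). infdist y C < d \<longrightarrow> (\<forall>i. \<pi> i \<in> U) \<longrightarrow>
           infdist (traj f y \<pi> (Suc j)) (reach f U C (Suc j)) < e"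
    proof (intro exI[of _ d] conjI allI impI)
      fix y and \<pi> :: "nat \<Rightarrow> 'b" assume h: "infdist y C < d" "\<forall>i. \<pi> i \<in> U"
      then have "infdist (traj f y \<pi> j) (reach f U C j) < d1" using d(2) by blast
      then obtain c where c: "c \<in> reach f U C j" "dist (traj f y \<pi> j) c < d1"
        using infdist_lessE[OF _ reach_ne[OF U(2) C(2)]] by blast
      have "dist (f (traj f y \<pi> j) (\<pi> j)) (f c (\<pi> j)) < e"
        using d1(2)[rule_format, OF c(1) _ c(2)] h(2) by blast
      moreover have "f c (\<pi> j) \<in> reach f U C (Suc j)" unfolding reach_Suc using c h(2) by force
      ultimately show "infdist (traj f y \<pi> (Suc j)) (reach f U C (Suc j)) < e"
        using infdist_le[of "f c (\<pi> j)" "reach f U C (Suc j)" "traj f y \<pi> (Suc j)"] by simp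
    qed (use d in auto)
  qed
qed

theorem theorem8:
  fixes f :: "'a::{real_normed_vector,heine_borel} \<Rightarrow> 'b::euclidean_space \<Rightarrow> 'a"
    and U :: "'b set" and A :: "'a set"
    and r M p :: real and lam :: "real \<Rightarrow> nat \<Rightarrow> real"
    and \<alpha> :: "'a \<Rightarrow> real" and alo ahi pbar :: real
    and X :: "'a set" and Xs :: "nat \<Rightarrow> 'a set"
  assumes f_cont: "continuous_on UNIV (\<lambda>(x, u). f x u)"
    and U: "compact U" "U \<noteq> {}"
    and A: "compact A" "A \<noteq> {}" "controlled_invariant f U A"
    and stab: "locally_lp_stabilizable f U A r M p lam"
    and \<alpha>_cont: "continuous_on UNIV \<alpha>"
    and \<alpha>_nonneg: "\<forall>x. \<alpha> x \<ge> 0"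
    and \<alpha>_bounds: "alo > 0" "ahi > 0" "pbar \<ge> p"
      "\<forall>x. alo * infdist x A powr pbar \<le> \<alpha> x \<and> \<alpha> x \<le> ahi * infdist x A powr pbar"
    and X: "compact X" "X \<noteq> {}" "X \<inter> DA f U A = {}"
    and Xs: "\<forall>k. compact (Xs k) \<and> Xs k \<noteq> {}"
    and conv: "(\<lambda>k. hausd (Xs k) X) \<longlonglongrightarrow> 0"
  shows "(\<lambda>k. Vfun \<alpha> f U (Xs k)) \<longlonglongrightarrow> \<infinity>"
proof -
  note st = stab[unfolded locally_lp_stabilizable_def]
  have r: "r > 0" and p: "p > 0" using st by auto
  have lam0: "(\<lambda>k. lam r k) \<longlonglongrightarrow> 0"
  proof -
    have "(\<lambda>k. lam r k powr p) \<longlonglongrightarrow> 0" using st summable_LIMSEQ_zero by blast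
    then have "(\<lambda>k. (lam r k powr p) powr (1/p)) \<longlonglongrightarrow> 0 powr (1/p)"
      by (intro tendsto_powr2) (use p in auto)
    moreover have "(lam r k powr p) powr (1/p) = lam r k" for k
      using st r p by (simp add: powr_powr)
    ultimately show ?thesis using p by simp
  qed
  have far: "infdist (traj f x \<pi> j) A > r" if x: "x \<in> X" and pi: "\<forall>i. \<pi> i \<in> U" for x \<pi> j
  proof (rule ccontr)
    assume "\<not> ?thesis"
    define z where "z = traj f x \<pi> j"
    have zr: "infdist z A \<le> r" using \<open>\<not> r < infdist (traj f x \<pi> j) A\<close> z_def by simp
    then obtain \<pi>2 where p2: "\<forall>i. \<pi>2 i \<in> U" "\<forall>k. infdist (traj f z \<pi>2 k) A \<le> M * lam (infdist z A) k"
      using st by blast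
    define \<pi>' where "\<pi>' = (\<lambda>k. if k < j then \<pi> k else \<pi>2 (k - j))"
    have pi': "\<forall>i. \<pi>' i \<in> U" using pi p2 unfolding \<pi>'_def by auto
    have tj: "traj f x \<pi>' j = z" unfolding z_def by (rule traj_cong) (simp add: \<pi>'_def)
    have sh: "(\<lambda>i. \<pi>' (j + i)) = \<pi>2" by (simp add: \<pi>'_def)
    have "(\<lambda>k. infdist (traj f x \<pi>' (k + j)) A) \<longlonglongrightarrow> 0"
    proof (rule tendsto_sandwich[where f="\<lambda>_. 0" and h="\<lambda>k. M * lam r k"])
      show "\<forall>\<^sub>F k in sequentially. 0 \<le> infdist (traj f x \<pi>' (k + j)) A" by (simp add: infdist_nonneg)
      show "\<forall>\<^sub>F k in sequentially. infdist (traj f x \<pi>' (k + j)) A \<le> M * lam r k"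
      proof (intro always_eventually allI)
        fix k
        have "traj f x \<pi>' (k + j) = traj f z \<pi>2 k"
          using traj_shift[of f x \<pi>' j k] tj sh by (simp add: add.commute)
        moreover have "lam (infdist z A) k \<le> lam r k"
          using st zr infdist_nonneg[of z A] unfolding mono_on_def by auto
        ultimately show "infdist (traj f x \<pi>' (k + j)) A \<le> M * lam r k"
        proof -
          have "M \<ge> 0" using st by simp
          then have "M * lam (infdist z A) k \<le> M * lam r k"
            using \<open>lam (infdist z A) k \<le> lam r k\<close> by (rule mult_left_mono[rotated])
          then show ?thesis using p2(2)[rule_format, of k] \<open>traj f x \<pi>' (k + j) = traj f z \<pi>2 k\<close>
            by simp
        qed
      qed
      show "(\<lambda>k. M * lam r k) \<longlonglongrightarrow> 0" using tendsto_mult_right_zero[OF lam0] by simp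
    qed simp
    then have "(\<lambda>k. infdist (traj f x \<pi>' k) A) \<longlonglongrightarrow> 0" by (rule LIMSEQ_offset)
    then have "x \<in> DA f U A" unfolding DA_def using pi' by blast
    then show False using X(3) x by blast
  qed
  define cst where "cst = alo * (r/2) powr pbar"
  have cst: "cst > 0" unfolding cst_def using \<alpha>_bounds r by simp
  have ev: "eventually (\<lambda>n. Psi \<alpha> (reach f U (Xs n) j) \<ge> cst) sequentially" for j
  proof -
    obtain d where d: "d > 0" "\<forall>y \<pi>. infdist y X < d \<longrightarrow> (\<forall>i. \<pi> i \<in> U) \<longrightarrow>
           infdist (traj f y \<pi> j) (reach f U X j) < r/2"
      using traj_near[OF f_cont U X(1,2), of j] r by (meson half_gt_zero)
    have "eventually (\<lambda>n. hausd (Xs n) X < d) sequentially"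
      using conv d(1) by (metis order_tendstoD(2))
    then show ?thesis
    proof (rule eventually_mono)
      fix n assume hn: "hausd (Xs n) X < d"
      have small: "infdist y X < d" if y: "y \<in> Xs n" for y
      proof -
        have "compact ((\<lambda>y. infdist y X) ` Xs n)"
          using Xs by (intro compact_continuous_image continuous_intros) auto
        then have "bdd_above ((\<lambda>y. infdist y X) ` Xs n)"
          by (intro bounded_imp_bdd_above compact_imp_bounded)
        then have "infdist y X \<le> (SUP y\<in>Xs n. infdist y X)" using y by (rule cSUP_upper2) simp
        also have "\<dots> \<le> hausd (Xs n) X" unfolding hausd_def by simp
        finally show ?thesis using hn by simp
      qed
      show "Psi \<alpha> (reach f U (Xs n) j) \<ge> cst"
        unfolding Psi_def
      proof (rule cINF_greatest)
        show "reach f U (Xs n) j \<noteq> {}" using reach_ne U Xs by metis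
        fix z assume "z \<in> reach f U (Xs n) j"
        then obtain y \<pi> where z: "z = traj f y \<pi> j" "y \<in> Xs n" "\<forall>i. \<pi> i \<in> U"
          unfolding reach_def by blast
        have "infdist z (reach f U X j) < r/2" using d(2) small z by blast
        then obtain c where c: "c \<in> reach f U X j" "dist z c < r/2"
          using infdist_lessE reach_ne[OF U(2) X(2)] by metis
        then obtain x \<pi>x where cx: "c = traj f x \<pi>x j" "x \<in> X" "\<forall>i. \<pi>x i \<in> U"
          unfolding reach_def by blast
        have "infdist c A > r" using far cx by blast
        moreover have "infdist c A \<le> infdist z A + dist c z" by (rule infdist_triangle)
        ultimately have zA: "infdist z A \<ge> r/2" using c(2) by (simp add: dist_commute)
        have "(r/2) powr pbar \<le> infdist z A powr pbar"
          using zA r \<alpha>_bounds(3) p by (intro powr_mono2) auto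
        then have "cst \<le> alo * infdist z A powr pbar" unfolding cst_def
          using \<alpha>_bounds(1) by simp
        also have "\<dots> \<le> \<alpha> z" using \<alpha>_bounds(4) by blast
        finally show "cst \<le> \<alpha> z" .
      qed
    qed
  qed
  show ?thesis
  proof (rule order_tendstoI)
    fix a :: ennreal assume "a < \<infinity>"
    then obtain t where t: "a = ennreal t" "t \<ge> 0"
      by (metis ennreal_cases infinity_ennreal_def less_irrefl)
    obtain K :: nat where K: "t / cst < real K" using reals_Archimedean2 by blast
    have "eventually (\<lambda>n. \<forall>j\<in>{..<K}. Psi \<alpha> (reach f U (Xs n) j) \<ge> cst) sequentially"
      using ev by (intro eventually_ball_finite) auto
    then show "eventually (\<lambda>n. a < Vfun \<alpha> f U (Xs n)) sequentially"
    proof (rule eventually_mono)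
      fix n assume hj: "\<forall>j\<in>{..<K}. Psi \<alpha> (reach f U (Xs n) j) \<ge> cst"
      have "ennreal (real K * cst) = (\<Sum>j<K. ennreal cst)"
        using cst by (simp add: ennreal_of_nat_eq_real_of_nat ennreal_mult')
      also have "\<dots> \<le> (\<Sum>j<K. ennreal (Psi \<alpha> (reach f U (Xs n) j)))"
        using hj by (intro sum_mono ennreal_leI) auto
      also have "\<dots> \<le> Vfun \<alpha> f U (Xs n)" unfolding Vfun_def
        by (intro sum_le_suminf summableI) auto
      finally have "ennreal (real K * cst) \<le> Vfun \<alpha> f U (Xs n)" .
      moreover have "t < real K * cst" using K cst by (simp add: field_simps)
      ultimately show "a < Vfun \<alpha> f U (Xs n)"
      proof -
        have "0 < real K * cst" using t \<open>t < real K * cst\<close> by linarith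
        then have "ennreal t < ennreal (real K * cst)"
          using \<open>t < real K * cst\<close> by (rule ennreal_lessI)
        then show ?thesis unfolding t(1)
          using \<open>ennreal (real K * cst) \<le> Vfun \<alpha> f U (Xs n)\<close> by (rule order_less_le_trans)
      qed
    qed
  qed simp
qed

end
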